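(* Let $\mathcal{H}^{\mathcal{T}}$ be a teaching-hypothesis-class and run the online active learning procedure described in the context on $\mathcal{H}^{\mathcal{T}}$, with any sequence of candidate hypothesis sets satisfying $H^{\mathcal{T}}_{t+1}\subseteq H^{\mathcal{T}}_{t}$ for all $t$ and $H^{\mathcal{T}}_1=\mathcal{H}^{\mathcal{T}}$. Then for any $\delta>0$, with probability at least $1-\delta$, for every $T\in\mathbb{N}^{+}$ and all $h,h'\in H^{\mathcal{T}}_T$, \[ \left|L_T(h)-L_T(h')-\left(R(h)-R(h')\right)\right|\leq\left(1+\mathcal{L}(h,h')\right)\Delta_T, \qquad \Delta_{T}=\sqrt{(2/T)\log\!\big(2T(T+1)|\mathcal{H}^{\mathcal{T}}|^{2}/ \delta\big)}. \]
   Context: Let $\mathcal{D}$ be an unknown distribution on $\mathcal{X}\times\mathcal{Y}$ with marginal $\mathcal{D}_{\mathcal{X}}$ on $\mathcal{X}$. Hypotheses are maps $h:\mathcal{X}\to\mathcal{Z}$ and $\ell:\mathcal{Z}\times\mathcal{Y}\to[0,1]$ is a loss. The generalization error is $R(h)=\mathbb{E}_{(x,y)\sim\mathcal{D}}[\ell(h(x),y)]$ and the error disagreement is $\mathcal{L}(h,h')=\mathbb{E}_{x\sim\mathcal{D}_{\mathcal{X}}}\big[\max_{y}|\ell(h(x),y)-\ell(h'(x),y)|\big]$. Let $\mathcal{H}$ be a hypothesis class with optimal hypothesis $h^*=\arg\min_{h\in\mathcal{H}}R(h)$, and let $h^{\mathcal{T}}$ be a teaching hypothesis with $\mathcal{L}(h^*,h^{\mathcal{T}})<\epsilon$.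 A teaching-hypothesis-class is a finite hypothesis class $\mathcal{H}^{\mathcal{T}}$ with $h^{\mathcal{T}}=\arg\min_{h\in\mathcal{H}^{\mathcal{T}}}R(h)$. Online procedure: pairs $(x_t,y_t)$, $t=1,2,\dots$, are drawn i.i.d. from $\mathcal{D}$ and the learner sees $x_t$. At time $t$ the learner holds a candidate set $H^{\mathcal{T}}_t$ (determined by the past), computes $p_t=\max_{h,h'\in H^{\mathcal{T}}_t}\max_{y}|\ell(h(x_t),y)-\ell(h'(x_t),y)|$, draws $Q_t\in\{0,1\}$ from a Bernoulli distribution with success probability $p_t$, and queries $y_t$ iff $Q_t=1$. The importance-weighted empirical error is $L_t(h)=\frac{1}{t}\sum_{k=1}^{t}\frac{Q_k}{p_k}\ell(h(x_k),y_k)$ (terms with $Q_k=0$ are taken to be $0$). *)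

theory Defs
  imports "HOL-Probability.Probability"
begin

definition gen_err :: "('x \<times> 'y) measure \<Rightarrow> ('z \<Rightarrow> 'y \<Rightarrow> real) \<Rightarrow> ('x \<Rightarrow> 'z) \<Rightarrow> real" where
  "gen_err D loss h = (\<integral>p. loss (h (fst p)) (snd p) \<partial>D)"

definition pt_dis :: "('z \<Rightarrow> 'y \<Rightarrow> real) \<Rightarrow> ('x \<Rightarrow> 'z) \<Rightarrow> ('x \<Rightarrow> 'z) \<Rightarrow> 'x \<Rightarrow> real" where
  "pt_dis loss h h' x = (SUP y. \<bar>loss (h x) y - loss (h' x) y\<bar>)"

definition err_dis :: "('x \<times> 'y) measure \<Rightarrow> ('z \<Rightarrow> 'y \<Rightarrow> real) \<Rightarrow> ('x \<Rightarrow> 'z) \<Rightarrow> ('x \<Rightarrow> 'z) \<Rightarrow> real" where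
  "err_dis D loss h h' = (\<integral>p. pt_dis loss h h' (fst p) \<partial>D)"

text \<open>Query probability p_t for candidate set Hs at point x
  (max over pairs; taken to be 0 for an empty candidate set).\<close>
definition query_prob :: "('z \<Rightarrow> 'y \<Rightarrow> real) \<Rightarrow> ('x \<Rightarrow> 'z) set \<Rightarrow> 'x \<Rightarrow> real" where
  "query_prob loss Hs x = Max (insert 0 ((\<lambda>(h, h'). pt_dis loss h h' x) ` (Hs \<times> Hs)))"

text \<open>Sample path: \<omega> k = ((x_k, y_k), u_k) for k = 1, 2, ...; u_k is uniform on [0,1]
  and the query coin is Q_k = (u_k < p_k), a Bernoulli(p_k) draw. Hsel t \<omega> is the
  candidate set H_t.\<close>
definition query :: "('z \<Rightarrow> 'y \<Rightarrow> real) \<Rightarrow> (nat \<Rightarrow> (nat \<Rightarrow> ('x \<times> 'y) \<times> real) \<Rightarrow> ('x \<Rightarrow> 'z) set)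
    \<Rightarrow> nat \<Rightarrow> (nat \<Rightarrow> ('x \<times> 'y) \<times> real) \<Rightarrow> bool" where
  "query loss Hsel k \<omega> = (snd (\<omega> k) < query_prob loss (Hsel k \<omega>) (fst (fst (\<omega> k))))"

definition iw_err :: "('z \<Rightarrow> 'y \<Rightarrow> real) \<Rightarrow> (nat \<Rightarrow> (nat \<Rightarrow> ('x \<times> 'y) \<times> real) \<Rightarrow> ('x \<Rightarrow> 'z) set)
    \<Rightarrow> nat \<Rightarrow> ('x \<Rightarrow> 'z) \<Rightarrow> (nat \<Rightarrow> ('x \<times> 'y) \<times> real) \<Rightarrow> real" where
  "iw_err loss Hsel T h \<omega> = (1 / real T) * (\<Sum>k = 1..T.
     (if query loss Hsel k \<omega>
      then loss (h (fst (fst (\<omega> k)))) (snd (fst (\<omega> k)))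
           / query_prob loss (Hsel k \<omega>) (fst (fst (\<omega> k)))
      else 0))"

definition Delta :: "nat \<Rightarrow> nat \<Rightarrow> real \<Rightarrow> real" where
  "Delta T n \<delta> = sqrt ((2 / real T) * ln (2 * real T * (real T + 1) * (real n)^2 / \<delta>))"

definition sample_space :: "('x \<times> 'y) measure \<Rightarrow> (nat \<Rightarrow> ('x \<times> 'y) \<times> real) measure" where
  "sample_space D = (\<Pi>\<^sub>M k\<in>UNIV. D \<Otimes>\<^sub>M uniform_measure lborel {0..1::real})"

end

theory Submission imports Defs begin


lemma pt_dis_ge:
  assumes "\<And>z y. 0 \<le> loss z y \<and> loss z y \<le> 1"
  shows "\<bar>loss (h x) y - loss (h' x) y\<bar> \<le> pt_dis loss h h' x"
  unfolding pt_dis_def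
proof (rule cSUP_upper)
  show "bdd_above (range (\<lambda>y. \<bar>loss (h x) y - loss (h' x) y\<bar>))"
  proof (rule bdd_aboveI[where M=1])
    fix v assume "v \<in> range (\<lambda>y. \<bar>loss (h x) y - loss (h' x) y\<bar>)"
    then obtain y where "v = \<bar>loss (h x) y - loss (h' x) y\<bar>" by auto
    then show "v \<le> 1" using assms[of "h x" y] assms[of "h' x" y] by auto
  qed
qed simp

lemma pt_dis_le1:
  assumes "\<And>z y. 0 \<le> loss z y \<and> loss z y \<le> 1"
  shows "pt_dis loss h h' x \<le> 1"
  unfolding pt_dis_def
proof (rule cSUP_least)
  fix y show "\<bar>loss (h x) y - loss (h' x) y\<bar> \<le> 1"
    using assms[of "h x" y] assms[of "h' x" y] by auto
qed simp

lemma pt_dis_nonneg: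
  assumes "\<And>z y. 0 \<le> loss z y \<and> loss z y \<le> 1"
  shows "0 \<le> pt_dis loss h h' x"
  by (rule order_trans[OF abs_ge_zero pt_dis_ge[OF assms]])

lemma query_prob_ge:
  assumes "finite Hs" "h \<in> Hs" "h' \<in> Hs"
  shows "pt_dis loss h h' x \<le> query_prob loss Hs x"
  unfolding query_prob_def
  by (rule Max_ge) (use assms in \<open>auto intro!: image_eqI[where x="(h,h')"]\<close>)

lemma query_prob_nonneg:
  assumes "finite Hs"
  shows "0 \<le> query_prob loss Hs x"
  unfolding query_prob_def
  by (rule Max_ge) (use assms in auto)

lemma query_prob_le1:
  assumes "finite Hs" "\<And>z y. 0 \<le> loss z y \<and> loss z y \<le> 1"
  shows "query_prob loss Hs x \<le> 1"
  unfolding query_prob_def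
  using assms by (subst Max_le_iff) (auto intro: pt_dis_le1)

lemma Max_insert0_meas:
  fixes F :: "'i \<Rightarrow> 'b \<Rightarrow> real"
  assumes "finite S" "\<And>i. i \<in> S \<Longrightarrow> F i \<in> borel_measurable N"
  shows "(\<lambda>x. Max (insert 0 ((\<lambda>i. F i x) ` S))) \<in> borel_measurable N"
  using assms
proof (induction S rule: finite_induct)
  case empty
  then show ?case by simp
next
  case (insert a S)
  have eq: "Max (insert 0 ((\<lambda>i. F i x) ` insert a S)) = max (F a x) (Max (insert 0 ((\<lambda>i. F i x) ` S)))" for x
    using insert.hyps by (cases "S = {}") (simp_all add: insert_commute[of "F a x" 0] max.left_commute max.commute)
  show ?case unfolding eq
    by (intro borel_measurable_max insert.IH insert.prems) auto
qed

lemma query_prob_meas: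
  fixes Hs :: "('x \<Rightarrow> 'z) set" and loss :: "'z \<Rightarrow> 'y \<Rightarrow> real" and N :: "('x \<times> 'w) measure"
  assumes "finite Hs" "\<And>h h'. h \<in> Hs \<Longrightarrow> h' \<in> Hs \<Longrightarrow> (\<lambda>q. pt_dis loss h h' (fst q)) \<in> borel_measurable N"
  shows "(\<lambda>q. query_prob loss Hs (fst q)) \<in> borel_measurable N"
proof -
  define F where "F = (\<lambda>(i::('x \<Rightarrow> 'z) \<times> ('x \<Rightarrow> 'z)) (q::'x \<times> 'w). pt_dis loss (fst i) (snd i) (fst q))"
  have "(\<lambda>q. Max (insert 0 ((\<lambda>i. F i q) ` (Hs \<times> Hs)))) \<in> borel_measurable N"
    by (rule Max_insert0_meas) (use assms in \<open>auto simp: F_def\<close>)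
  then show ?thesis unfolding query_prob_def F_def by (simp add: split_beta')
qed


lemma measure_U_lessThan:
  assumes "0 \<le> t" "t \<le> 1"
  shows "measure (uniform_measure lborel {0..1::real}) {..<t} = t"
proof -
  have "{0..1} \<inter> {..<t} = {0..<t}" using assms by auto
  then have "emeasure (uniform_measure lborel {0..1::real}) {..<t} = ennreal t"
    using assms by (simp add: emeasure_uniform_measure emeasure_lborel_Ico divide_ennreal_def)
  then show ?thesis using assms by (simp add: measure_def)
qed

lemma integral_U_ind:
  assumes "0 \<le> t" "t \<le> 1"
  shows "(\<integral>u. indicator {..<t} u * c \<partial>uniform_measure lborel {0..1::real}) = t * c"
proof -
  interpret U: prob_space "uniform_measure lborel {0..1::real}"
    by (rule prob_space_uniform_measure) (simp_all add: emeasure_lborel_Icc)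
  have "(\<integral>u. indicator {..<t} u * c \<partial>uniform_measure lborel {0..1::real})
      = measure (uniform_measure lborel {0..1::real}) {..<t} * c"
    by (subst integral_mult_left_zero) (simp add: U.emeasure_eq_measure)
  then show ?thesis using measure_U_lessThan[OF assms] by simp
qed


definition Gfun :: "('z \<Rightarrow> 'y \<Rightarrow> real) \<Rightarrow> ('x \<Rightarrow> 'z) set \<Rightarrow> ('x \<Rightarrow> 'z) \<Rightarrow> ('x \<Rightarrow> 'z) \<Rightarrow> ('x \<times> 'y) \<times> real \<Rightarrow> real" where
  "Gfun loss Hs h h' q =
     (if snd q < query_prob loss Hs (fst (fst q)) then loss (h (fst (fst q))) (snd (fst q)) / query_prob loss Hs (fst (fst q)) else 0)
   - (if snd q < query_prob loss Hs (fst (fst q)) then loss (h' (fst (fst q))) (snd (fst q)) / query_prob loss Hs (fst (fst q)) else 0)"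

lemma Gfun_bound:
  assumes lr: "\<And>z y. 0 \<le> loss z y \<and> loss z y \<le> 1" and "finite Hs" "h \<in> Hs" "h' \<in> Hs"
  shows "Gfun loss Hs h h' q \<in> {-1..1}"
proof -
  obtain x y u where q: "q = ((x,y),u)" by (metis prod.collapse)
  let ?p = "query_prob loss Hs x"
  have d: "\<bar>loss (h x) y - loss (h' x) y\<bar> \<le> ?p"
    using pt_dis_ge[where loss=loss and h=h and h'=h' and x=x and y=y, OF lr] query_prob_ge[OF assms(2-4), of loss x] by linarith
  show ?thesis
  proof (cases "u < ?p \<and> ?p \<noteq> 0")
    case True
    then have pp: "?p > 0" using query_prob_nonneg[OF assms(2), of loss x] by linarith
    have "Gfun loss Hs h h' q = (loss (h x) y - loss (h' x) y) / ?p"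
      using True by (simp add: Gfun_def q diff_divide_distrib)
    moreover have v: "\<bar>(loss (h x) y - loss (h' x) y) / ?p\<bar> \<le> 1"
      using d pp by (simp add: abs_divide divide_le_eq_1)
    moreover have "-1 \<le> (loss (h x) y - loss (h' x) y) / ?p"
      using abs_le_D2[OF v] by linarith
    moreover have "(loss (h x) y - loss (h' x) y) / ?p \<le> 1"
      using abs_le_D1[OF v] by linarith
    ultimately show ?thesis by simp
  next
    case False
    then show ?thesis by (auto simp: Gfun_def q)
  qed
qed

lemma Gfun_meas:
  fixes D :: "('x \<times> 'y) measure" and loss :: "'z \<Rightarrow> 'y \<Rightarrow> real"
  assumes fin: "finite Hs"
    and lh: "(\<lambda>q. loss (h (fst q)) (snd q)) \<in> borel_measurable D"
    and lh': "(\<lambda>q. loss (h' (fst q)) (snd q)) \<in> borel_measurable D"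
    and dm: "\<And>h h'. h \<in> Hs \<Longrightarrow> h' \<in> Hs \<Longrightarrow> (\<lambda>q. pt_dis loss h h' (fst q)) \<in> borel_measurable D"
  shows "Gfun loss Hs h h' \<in> borel_measurable (D \<Otimes>\<^sub>M uniform_measure lborel {0..1::real})"
proof -
  have pm: "(\<lambda>q. query_prob loss Hs (fst q)) \<in> borel_measurable D"
    by (rule query_prob_meas[OF fin dm])
  have [measurable]: "(\<lambda>q. query_prob loss Hs (fst (fst q))) \<in> borel_measurable (D \<Otimes>\<^sub>M uniform_measure lborel {0..1::real})"
    by (rule measurable_compose[OF measurable_fst pm])
  have [measurable]: "(\<lambda>q. loss (h (fst (fst q))) (snd (fst q))) \<in> borel_measurable (D \<Otimes>\<^sub>M uniform_measure lborel {0..1::real})"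
    by (rule measurable_compose[OF measurable_fst lh])
  have [measurable]: "(\<lambda>q. loss (h' (fst (fst q))) (snd (fst q))) \<in> borel_measurable (D \<Otimes>\<^sub>M uniform_measure lborel {0..1::real})"
    by (rule measurable_compose[OF measurable_fst lh'])
  show ?thesis
    unfolding Gfun_def[abs_def] by measurable
qed

lemma step_hoeff:
  fixes D :: "('x \<times> 'y) measure" and loss :: "'z \<Rightarrow> 'y \<Rightarrow> real"
  assumes D: "prob_space D" and lr: "\<And>z y. 0 \<le> loss z y \<and> loss z y \<le> 1"
    and fin: "finite Hs" and hh: "h \<in> Hs" "h' \<in> Hs"
    and lm: "\<And>h. h \<in> Hs \<Longrightarrow> (\<lambda>q. loss (h (fst q)) (snd q)) \<in> borel_measurable D"
    and dm: "\<And>h h'. h \<in> Hs \<Longrightarrow> h' \<in> Hs \<Longrightarrow> (\<lambda>q. pt_dis loss h h' (fst q)) \<in> borel_measurable D"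
  shows "(\<integral>\<^sup>+ q. ennreal (exp (l * (Gfun loss Hs h h' q - (gen_err D loss h - gen_err D loss h'))))
            \<partial>(D \<Otimes>\<^sub>M uniform_measure lborel {0..1::real})) \<le> ennreal (exp (l^2/2))"
proof -
  let ?U = "uniform_measure lborel {0..1::real}"
  let ?M = "D \<Otimes>\<^sub>M ?U"
  let ?r = "gen_err D loss h - gen_err D loss h'"
  interpret D: prob_space D by (rule D)
  interpret U: prob_space ?U
    by (rule prob_space_uniform_measure) (simp_all add: emeasure_lborel_Icc)
  interpret DU: pair_prob_space D ?U by unfold_locales
  have pm: "(\<lambda>q. query_prob loss Hs (fst q)) \<in> borel_measurable D"
    by (rule query_prob_meas[OF fin dm])
  have [measurable]: "(\<lambda>q. query_prob loss Hs (fst (fst q))) \<in> borel_measurable ?M"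
    by (rule measurable_compose[OF measurable_fst pm])
  have [measurable]: "(\<lambda>q. loss (h (fst (fst q))) (snd (fst q))) \<in> borel_measurable ?M"
    by (rule measurable_compose[OF measurable_fst lm[OF hh(1)]])
  have [measurable]: "(\<lambda>q. loss (h' (fst (fst q))) (snd (fst q))) \<in> borel_measurable ?M"
    by (rule measurable_compose[OF measurable_fst lm[OF hh(2)]])
  have Gm[measurable]: "Gfun loss Hs h h' \<in> borel_measurable ?M"
    unfolding Gfun_def[abs_def] by measurable
  have Gb: "Gfun loss Hs h h' q \<in> {-1..1}" for q by (rule Gfun_bound[OF lr fin hh])
  have Gint: "integrable ?M (Gfun loss Hs h h')"
    by (rule DU.integrable_const_bound[where B=1]) (use Gb in \<open>auto simp: abs_le_iff\<close>)
  have inner: "(\<integral>u. Gfun loss Hs h h' (a, u) \<partial>?U) = loss (h (fst a)) (snd a) - loss (h' (fst a)) (snd a)" for a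
  proof -
    obtain x y where a: "a = (x,y)" by (metis prod.collapse)
    let ?p = "query_prob loss Hs x"
    let ?c = "loss (h x) y / ?p - loss (h' x) y / ?p"
    have d: "\<bar>loss (h x) y - loss (h' x) y\<bar> \<le> ?p"
      using pt_dis_ge[where loss=loss and h=h and h'=h' and x=x and y=y, OF lr] query_prob_ge[OF fin hh, of loss x] by linarith
    have "Gfun loss Hs h h' (a, u) = indicator {..<?p} u * ?c" for u
      by (simp add: Gfun_def a indicator_def)
    then have "(\<integral>u. Gfun loss Hs h h' (a, u) \<partial>?U) = ?p * ?c"
      using integral_U_ind[of ?p ?c] query_prob_nonneg[OF fin, of loss x] query_prob_le1[where loss=loss and x=x, OF fin lr]
      by simp
    also have "\<dots> = loss (h x) y - loss (h' x) y"
      using d by (cases "?p = 0") (auto simp: right_diff_distrib)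
    finally show ?thesis by (simp add: a)
  qed
  have lhi: "integrable D (\<lambda>q. loss (h (fst q)) (snd q))"
    by (rule D.integrable_const_bound[where B=1]) (use lr lm[OF hh(1)] in auto)
  have lhi': "integrable D (\<lambda>q. loss (h' (fst q)) (snd q))"
    by (rule D.integrable_const_bound[where B=1]) (use lr lm[OF hh(2)] in auto)
  have EG: "(\<integral>q. Gfun loss Hs h h' q \<partial>?M) = ?r"
  proof -
    have "(\<integral>q. Gfun loss Hs h h' q \<partial>?M) = (\<integral>a. \<integral>u. Gfun loss Hs h h' (a, u) \<partial>?U \<partial>D)"
      by (rule DU.integral_fst'[OF Gint, symmetric])
    also have "\<dots> = (\<integral>a. loss (h (fst a)) (snd a) - loss (h' (fst a)) (snd a) \<partial>D)"
      by (simp add: inner)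
    also have "\<dots> = ?r"
      by (simp add: Bochner_Integration.integral_diff[OF lhi lhi'] gen_err_def)
    finally show ?thesis .
  qed
  interpret I1: interval_bounded_random_variable ?M "Gfun loss Hs h h'" "-1" 1
    by unfold_locales (use Gb in auto)
  interpret I2: interval_bounded_random_variable ?M "\<lambda>q. - Gfun loss Hs h h' q" "-1" 1
    by unfold_locales (use Gb in auto)
  consider "l > 0" | "l < 0" | "l = 0" by linarith
  then show ?thesis
  proof cases
    case 1
    from I1.Hoeffdings_lemma_nn_integral[OF 1] show ?thesis by (simp add: EG power2_eq_square)
  next
    case 2
    have "-l > 0" using 2 by simp
    from I2.Hoeffdings_lemma_nn_integral[OF this] show ?thesis
      by (simp add: EG power2_eq_square algebra_simps)
  next
    case 3
    then show ?thesis by (simp add: DU.emeasure_space_1)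
  qed
qed

lemma chernoff:
  fixes X :: "'b \<Rightarrow> real"
  assumes [measurable]: "X \<in> borel_measurable N" and l: "l \<ge> 0"
  shows "emeasure N {\<omega>\<in>space N. a \<le> X \<omega>} \<le> ennreal (exp (- l * a)) * (\<integral>\<^sup>+\<omega>. ennreal (exp (l * X \<omega>)) \<partial>N)"
proof -
  have B: "{\<omega>\<in>space N. a \<le> X \<omega>} \<in> sets N" by measurable
  have "emeasure N {\<omega>\<in>space N. a \<le> X \<omega>} = (\<integral>\<^sup>+\<omega>. indicator {\<omega>\<in>space N. a \<le> X \<omega>} \<omega> \<partial>N)"
    using B by simp
  also have "\<dots> \<le> (\<integral>\<^sup>+\<omega>. ennreal (exp (- l * a)) * ennreal (exp (l * X \<omega>)) \<partial>N)"
  proof (rule nn_integral_mono)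
    fix \<omega> assume "\<omega> \<in> space N"
    show "indicator {\<omega>\<in>space N. a \<le> X \<omega>} \<omega> \<le> ennreal (exp (- l * a)) * ennreal (exp (l * X \<omega>))"
    proof (cases "a \<le> X \<omega>")
      case True
      have "1 \<le> exp (- l * a) * exp (l * X \<omega>)"
        using True l by (simp add: exp_add[symmetric] algebra_simps) (metis mult.commute mult_left_mono)
      then show ?thesis using True \<open>\<omega> \<in> space N\<close>
        by (simp add: ennreal_mult[symmetric])
    qed simp
  qed
  also have "\<dots> = ennreal (exp (- l * a)) * (\<integral>\<^sup>+\<omega>. ennreal (exp (l * X \<omega>)) \<partial>N)"
    by (rule nn_integral_cmult) measurable
  finally show ?thesis .
qed

context sequence_space
begin

lemma key_step:
  fixes f g :: "(nat \<Rightarrow> 'a) \<Rightarrow> ennreal"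
  assumes f[measurable]: "f \<in> borel_measurable S" and g[measurable]: "g \<in> borel_measurable S"
  and fdep: "\<And>\<omega> \<omega>'. (\<forall>j<k. \<omega> j = \<omega>' j) \<Longrightarrow> f \<omega> = f \<omega>'"
  and gdep: "\<And>\<omega> \<omega>'. (\<forall>j\<le>k. \<omega> j = \<omega>' j) \<Longrightarrow> g \<omega> = g \<omega>'"
  and gbd: "\<And>\<omega>. \<omega> \<in> space S \<Longrightarrow> (\<integral>\<^sup>+ s. g (fun_upd \<omega> k s) \<partial>M) \<le> C"
  shows "(\<integral>\<^sup>+\<omega>. f \<omega> * g \<omega> \<partial>S) \<le> C * (\<integral>\<^sup>+\<omega>. f \<omega> \<partial>S)"
proof -

  have "(\<integral>\<^sup>+\<omega>. f \<omega> * g \<omega> \<partial>S) = (\<integral>\<^sup>+\<omega>. f \<omega> * g \<omega> \<partial>distr (S \<Otimes>\<^sub>M S) S (\<lambda>(\<omega>, \<omega>'). comb_seq k \<omega> \<omega>'))"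
    by (simp add: PiM_comb_seq)
  also have "\<dots> = (\<integral>\<^sup>+p. f (comb_seq k (fst p) (snd p)) * g (comb_seq k (fst p) (snd p)) \<partial>(S \<Otimes>\<^sub>M S))"
    by (subst nn_integral_distr) (auto simp: split_beta' intro!: measurable_comb_seq)
  also have "\<dots> = (\<integral>\<^sup>+\<omega>1. \<integral>\<^sup>+\<omega>2. f (comb_seq k \<omega>1 \<omega>2) * g (comb_seq k \<omega>1 \<omega>2) \<partial>S \<partial>S)"
    by (subst sigma_finite_measure.nn_integral_fst[symmetric]) (auto intro: P.sigma_finite_measure_axioms)
  also have "\<dots> \<le> (\<integral>\<^sup>+\<omega>1. f \<omega>1 * C \<partial>S)"
  proof (rule nn_integral_mono)
    fix \<omega>1 assume w1: "\<omega>1 \<in> space S"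
    have fe: "f (comb_seq k \<omega>1 \<omega>2) = f \<omega>1" for \<omega>2
      by (rule fdep) (simp add: comb_seq_less)
    have ge: "g (comb_seq k \<omega>1 \<omega>2) = g (fun_upd \<omega>1 k (\<omega>2 0))" for \<omega>2
      by (rule gdep) (auto simp: comb_seq_def)
    have gm: "(\<lambda>s. g (fun_upd \<omega>1 k s)) \<in> borel_measurable M"
      by (rule measurable_compose[OF _ g]) (rule measurable_fun_upd[where J=UNIV], auto simp: w1)
    have "(\<integral>\<^sup>+\<omega>2. f (comb_seq k \<omega>1 \<omega>2) * g (comb_seq k \<omega>1 \<omega>2) \<partial>S)
        = f \<omega>1 * (\<integral>\<^sup>+\<omega>2. g (fun_upd \<omega>1 k (\<omega>2 0)) \<partial>S)"
      unfolding fe ge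
      by (rule nn_integral_cmult, rule measurable_compose[OF _ gm]) simp
    also have "(\<integral>\<^sup>+\<omega>2. g (fun_upd \<omega>1 k (\<omega>2 0)) \<partial>S) = (\<integral>\<^sup>+s. g (fun_upd \<omega>1 k s) \<partial>distr S M (\<lambda>\<omega>. \<omega> 0))"
      by (subst nn_integral_distr) (auto simp: gm)
    also have "\<dots> = (\<integral>\<^sup>+s. g (fun_upd \<omega>1 k s) \<partial>M)"
      using PiM_component[of 0] by simp
    finally show "(\<integral>\<^sup>+\<omega>2. f (comb_seq k \<omega>1 \<omega>2) * g (comb_seq k \<omega>1 \<omega>2) \<partial>S) \<le> f \<omega>1 * C"
      using gbd[OF w1] by (simp add: mult_left_mono)
  qed
  also have "\<dots> = C * (\<integral>\<^sup>+\<omega>. f \<omega> \<partial>S)"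
    by (simp add: mult.commute nn_integral_cmult)
  finally show ?thesis .
qed


lemma mgf_bound:
  fixes W :: "nat \<Rightarrow> (nat \<Rightarrow> 'a) \<Rightarrow> real"
  assumes meas[measurable]: "\<And>k. W k \<in> borel_measurable S"
  and dep: "\<And>k \<omega> \<omega>'. (\<forall>j\<le>k. \<omega> j = \<omega>' j) \<Longrightarrow> W k \<omega> = W k \<omega>'"
  and bd: "\<And>k \<omega>. k \<ge> 1 \<Longrightarrow> \<omega> \<in> space S \<Longrightarrow>
     (\<integral>\<^sup>+ s. ennreal (exp (l * W k (fun_upd \<omega> k s))) \<partial>M) \<le> ennreal (exp (l^2/2))"
  shows "(\<integral>\<^sup>+\<omega>. ennreal (exp (l * (\<Sum>k=1..T. W k \<omega>))) \<partial>S) \<le> ennreal (exp (real T * l^2/2))"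
proof (induction T)
  case 0
  then show ?case by (simp add: P.emeasure_space_1)
next
  case (Suc T)
  have eq: "ennreal (exp (l * (\<Sum>k=1..Suc T. W k \<omega>))) =
     ennreal (exp (l * (\<Sum>k=1..T. W k \<omega>))) * ennreal (exp (l * W (Suc T) \<omega>))" for \<omega>
    by (simp add: distrib_left exp_add ennreal_mult)
  have "(\<integral>\<^sup>+\<omega>. ennreal (exp (l * (\<Sum>k=1..Suc T. W k \<omega>))) \<partial>S)
     \<le> ennreal (exp (l^2/2)) * (\<integral>\<^sup>+\<omega>. ennreal (exp (l * (\<Sum>k=1..T. W k \<omega>))) \<partial>S)"
    unfolding eq
  proof (rule key_step[where k="Suc T"])
    show "(\<lambda>\<omega>. ennreal (exp (l * (\<Sum>k=1..T. W k \<omega>)))) \<in> borel_measurable S" by measurable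
    show "(\<lambda>\<omega>. ennreal (exp (l * W (Suc T) \<omega>))) \<in> borel_measurable S" by measurable
    show "ennreal (exp (l * (\<Sum>k=1..T. W k \<omega>))) = ennreal (exp (l * (\<Sum>k=1..T. W k \<omega>')))"
      if "\<forall>j<Suc T. \<omega> j = \<omega>' j" for \<omega> \<omega>'
    proof -
      have "W k \<omega> = W k \<omega>'" if "k \<in> {1..T}" for k
        by (rule dep) (use that \<open>\<forall>j<Suc T. \<omega> j = \<omega>' j\<close> in auto)
      then show ?thesis by (metis (mono_tags, lifting) sum.cong)
    qed
    show "ennreal (exp (l * W (Suc T) \<omega>)) = ennreal (exp (l * W (Suc T) \<omega>'))"
      if "\<forall>j\<le>Suc T. \<omega> j = \<omega>' j" for \<omega> \<omega>'
      using dep[OF that] by simp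
    show "(\<integral>\<^sup>+ s. ennreal (exp (l * W (Suc T) (fun_upd \<omega> (Suc T) s))) \<partial>M) \<le> ennreal (exp (l^2/2))"
      if "\<omega> \<in> space S" for \<omega>
      by (rule bd) (use that in auto)
  qed
  also have "\<dots> \<le> ennreal (exp (l^2/2)) * ennreal (exp (real T * l^2/2))"
    by (rule mult_left_mono[OF Suc.IH]) simp
  also have "\<dots> = ennreal (exp (real (Suc T) * l^2/2))"
    by (simp add: ennreal_mult[symmetric] exp_add[symmetric] algebra_simps add_divide_distrib)
  finally show ?case .
qed


lemma tails:
  fixes W :: "nat \<Rightarrow> (nat \<Rightarrow> 'a) \<Rightarrow> real"
  assumes meas[measurable]: "\<And>k. W k \<in> borel_measurable S"
  and dep: "\<And>k \<omega> \<omega>'. (\<forall>j\<le>k. \<omega> j = \<omega>' j) \<Longrightarrow> W k \<omega> = W k \<omega>'"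
  and bd: "\<And>l k \<omega>. k \<ge> 1 \<Longrightarrow> \<omega> \<in> space S \<Longrightarrow>
     (\<integral>\<^sup>+ s. ennreal (exp (l * W k (fun_upd \<omega> k s))) \<partial>M) \<le> ennreal (exp (l^2/2))"
  and \<Delta>: "\<Delta> \<ge> 0"
  shows "emeasure S {\<omega>\<in>space S. real T * \<Delta> \<le> (\<Sum>k=1..T. W k \<omega>)} \<le> ennreal (exp (- real T * \<Delta>^2/2))"
    and "emeasure S {\<omega>\<in>space S. real T * \<Delta> \<le> - (\<Sum>k=1..T. W k \<omega>)} \<le> ennreal (exp (- real T * \<Delta>^2/2))"
proof -
  have e: "ennreal (exp (- \<Delta> * (real T * \<Delta>))) * ennreal (exp (real T * L^2/2)) = ennreal (exp (- real T * \<Delta>^2/2))"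
    if "L^2 = \<Delta>^2" for L
    using that by (simp add: ennreal_mult[symmetric] exp_add[symmetric] power2_eq_square algebra_simps)
  have "emeasure S {\<omega>\<in>space S. real T * \<Delta> \<le> (\<Sum>k=1..T. W k \<omega>)}
      \<le> ennreal (exp (- \<Delta> * (real T * \<Delta>))) * (\<integral>\<^sup>+\<omega>. ennreal (exp (\<Delta> * (\<Sum>k=1..T. W k \<omega>))) \<partial>S)"
    by (rule chernoff[OF _ \<Delta>]) measurable
  also have "\<dots> \<le> ennreal (exp (- \<Delta> * (real T * \<Delta>))) * ennreal (exp (real T * \<Delta>^2/2))"
    by (intro mult_left_mono mgf_bound[OF meas dep bd]) auto
  finally show "emeasure S {\<omega>\<in>space S. real T * \<Delta> \<le> (\<Sum>k=1..T. W k \<omega>)} \<le> ennreal (exp (- real T * \<Delta>^2/2))"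
    using e[of \<Delta>] by simp
  have "emeasure S {\<omega>\<in>space S. real T * \<Delta> \<le> - (\<Sum>k=1..T. W k \<omega>)}
      \<le> ennreal (exp (- \<Delta> * (real T * \<Delta>))) * (\<integral>\<^sup>+\<omega>. ennreal (exp (\<Delta> * - (\<Sum>k=1..T. W k \<omega>))) \<partial>S)"
    by (rule chernoff[OF _ \<Delta>]) measurable
  also have "(\<integral>\<^sup>+\<omega>. ennreal (exp (\<Delta> * - (\<Sum>k=1..T. W k \<omega>))) \<partial>S)
     = (\<integral>\<^sup>+\<omega>. ennreal (exp ((- \<Delta>) * (\<Sum>k=1..T. W k \<omega>))) \<partial>S)" by simp
  also have "ennreal (exp (- \<Delta> * (real T * \<Delta>))) * \<dots> \<le> ennreal (exp (- \<Delta> * (real T * \<Delta>))) * ennreal (exp (real T * (-\<Delta>)^2/2))"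
    by (intro mult_left_mono mgf_bound[OF meas dep bd]) auto
  finally show "emeasure S {\<omega>\<in>space S. real T * \<Delta> \<le> - (\<Sum>k=1..T. W k \<omega>)} \<le> ennreal (exp (- real T * \<Delta>^2/2))"
    using e[of "-\<Delta>"] by simp
qed

end

lemma frac_aux: "(x::real) \<noteq> 0 \<Longrightarrow> x * (d / (c * x)) = d / c"
  by (cases "c = 0") (simp_all add: field_simps)

theorem lemma7:
  fixes D :: "('x \<times> 'y) measure"
    and loss :: "'z \<Rightarrow> 'y \<Rightarrow> real"
    and H HT :: "('x \<Rightarrow> 'z) set"
    and hstar hT :: "'x \<Rightarrow> 'z"
    and eps \<delta> :: real
    and Hsel :: "nat \<Rightarrow> (nat \<Rightarrow> ('x \<times> 'y) \<times> real) \<Rightarrow> ('x \<Rightarrow> 'z) set"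
  assumes D: "prob_space D"
    and loss_range: "\<And>z y. 0 \<le> loss z y \<and> loss z y \<le> 1"
    and loss_meas: "\<And>h. h \<in> HT \<Longrightarrow> (\<lambda>p. loss (h (fst p)) (snd p)) \<in> borel_measurable D"
    and dis_meas: "\<And>h h'. h \<in> HT \<Longrightarrow> h' \<in> HT \<Longrightarrow>
                     (\<lambda>p. pt_dis loss h h' (fst p)) \<in> borel_measurable D"
    and hstar: "hstar \<in> H" "\<forall>h\<in>H. gen_err D loss hstar \<le> gen_err D loss h"
    and hT_teach: "err_dis D loss hstar hT < eps"
    and HT_fin: "finite HT"
    and hT: "hT \<in> HT" "\<forall>h\<in>HT. gen_err D loss hT \<le> gen_err D loss h"
    and H1: "\<And>\<omega>. Hsel 1 \<omega> = HT"
    and Hmono: "\<And>t \<omega>. t \<ge> 1 \<Longrightarrow> Hsel (Suc t) \<omega> \<subseteq> Hsel t \<omega>"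
    and Hpast: "\<And>t \<omega> \<omega>'. (\<forall>k<t. \<omega> k = \<omega>' k) \<Longrightarrow> Hsel t \<omega> = Hsel t \<omega>'"
    and Hmeas: "\<And>t h. {\<omega> \<in> space (sample_space D). h \<in> Hsel t \<omega>} \<in> sets (sample_space D)"
    and \<delta>: "\<delta> > 0"
  shows "\<exists>A \<in> sets (sample_space D).
           measure (sample_space D) A \<ge> 1 - \<delta> \<and>
           (\<forall>\<omega>\<in>A. \<forall>T::nat. T \<ge> 1 \<longrightarrow> (\<forall>h\<in>Hsel T \<omega>. \<forall>h'\<in>Hsel T \<omega>.
              \<bar>iw_err loss Hsel T h \<omega> - iw_err loss Hsel T h' \<omega>
                 - (gen_err D loss h - gen_err D loss h')\<bar>
              \<le> (1 + err_dis D loss h h') * Delta T (card HT) \<delta>))"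
proof -
  consider "\<delta> \<ge> 1" | "\<delta> < 1" by linarith
  then show ?thesis
  proof cases
    case 1
    show ?thesis by (rule bexI[of _ "{}"]) (use 1 in auto)
  next
    case 2
    define U where "U = uniform_measure lborel {0..1::real}"
    define M0 where "M0 = D \<Otimes>\<^sub>M U"
    interpret D: prob_space D by (rule D)
    have pU: "prob_space U" unfolding U_def
      by (rule prob_space_uniform_measure) (simp_all add: emeasure_lborel_Icc)
    have pM0: "prob_space M0" unfolding M0_def by (rule prob_space_pair[OF D pU])
    have sq: "sequence_space M0"
      unfolding sequence_space_def product_prob_space_def product_sigma_finite_def product_prob_space_axioms_def
      using pM0 prob_space_imp_sigma_finite by auto
    interpret Seq: sequence_space M0 by (rule sq)
    have SS: "sample_space D = Seq.S" by (simp add: sample_space_def M0_def U_def)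
    have Hsub: "Hsel k \<omega> \<subseteq> HT" if "1 \<le> k" for k \<omega>
      using that
    proof (induction k rule: nat_induct_at_least)
      case base then show ?case using H1[of \<omega>] by simp
    next
      case (Suc n) then show ?case using Hmono[of n \<omega>] by blast
    qed
    have Hanti: "Hsel T \<omega> \<subseteq> Hsel k \<omega>" if "1 \<le> k" "k \<le> T" for k T \<omega>
      using that(2)
    proof (induction T rule: dec_induct)
      case base then show ?case by simp
    next
      case (step n) then show ?case using Hmono[of n \<omega>] that(1) by auto
    qed
    define n where "n = card HT"
    have n1: "n \<ge> 1" using hT(1) HT_fin by (simp add: n_def Suc_le_eq card_gt_0_iff) blast
    define r where "r h h' = gen_err D loss h - gen_err D loss h'" for h h'
    define W where "W h h' k \<omega> = (if 1 \<le> k \<and> h \<in> Hsel k \<omega> \<and> h' \<in> Hsel k \<omega>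
        then Gfun loss (Hsel k \<omega>) h h' (\<omega> k) - r h h' else 0)" for h h' k \<omega>
    have setHs: "{\<omega> \<in> space Seq.S. Hsel k \<omega> = Hs} \<in> sets Seq.S" if "1 \<le> k" "Hs \<subseteq> HT" for k Hs
    proof -
      have "{\<omega> \<in> space Seq.S. Hsel k \<omega> = Hs} = {\<omega> \<in> space Seq.S. \<forall>g\<in>HT. (g \<in> Hsel k \<omega> \<longleftrightarrow> g \<in> Hs)}"
        using Hsub[OF that(1)] that(2) by blast
      also have "\<dots> \<in> sets Seq.S"
      proof (rule sets.sets_Collect_finite_All[OF _ HT_fin])
        fix g assume "g \<in> HT"
        have hm: "{\<omega> \<in> space Seq.S. g \<in> Hsel k \<omega>} \<in> sets Seq.S" using Hmeas[where t=k and h=g] by (simp add: SS)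
        show "{\<omega> \<in> space Seq.S. (g \<in> Hsel k \<omega>) = (g \<in> Hs)} \<in> sets Seq.S"
        proof (cases "g \<in> Hs")
          case True then show ?thesis using hm by simp
        next
          case False
          have "{\<omega> \<in> space Seq.S. (g \<in> Hsel k \<omega>) = (g \<in> Hs)} = space Seq.S - {\<omega> \<in> space Seq.S. g \<in> Hsel k \<omega>}"
            using False by auto
          then show ?thesis using hm by auto
        qed
      qed
      finally show ?thesis .
    qed
    have Gm: "Gfun loss Hs h h' \<in> borel_measurable M0" if "Hs \<subseteq> HT" "h \<in> HT" "h' \<in> HT" for Hs h h'
      unfolding M0_def U_def
      by (rule Gfun_meas) (use that HT_fin in \<open>auto intro: finite_subset loss_meas dis_meas\<close>)
    have Wmeas: "W h h' k \<in> borel_measurable Seq.S" if hh: "h \<in> HT" "h' \<in> HT" for h h' k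
    proof (cases "1 \<le> k")
      case False
      then have "W h h' k = (\<lambda>_. 0)" by (auto simp: W_def fun_eq_iff)
      then show ?thesis by simp
    next
      case True
      define V where "V Hs \<omega> = (if h \<in> Hs \<and> h' \<in> Hs then Gfun loss Hs h h' (\<omega> k) - r h h' else 0)" for Hs \<omega>
      have eq: "W h h' k = (\<lambda>\<omega>. \<Sum>Hs\<in>Pow HT. if Hsel k \<omega> = Hs then V Hs \<omega> else 0)"
      proof
        fix \<omega>
        show "W h h' k \<omega> = (\<Sum>Hs\<in>Pow HT. if Hsel k \<omega> = Hs then V Hs \<omega> else 0)"
          using Hsub[OF True, of \<omega>] HT_fin True by (simp add: sum.delta' W_def V_def)
      qed
      show ?thesis unfolding eq
      proof (intro borel_measurable_sum measurable_If)
        fix Hs assume Hs: "Hs \<in> Pow HT"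
        show "{\<omega> \<in> space Seq.S. Hsel k \<omega> = Hs} \<in> sets Seq.S" using setHs[OF True] Hs by auto
        have "(\<lambda>\<omega>. Gfun loss Hs h h' (\<omega> k)) \<in> borel_measurable Seq.S"
          by (rule measurable_PiM_component_rev) (use Gm[of Hs h h'] Hs hh in auto)
        then show "V Hs \<in> borel_measurable Seq.S" unfolding V_def by measurable
      qed simp
    qed
    have Wdep: "W h h' k \<omega> = W h h' k \<omega>'" if "\<forall>j\<le>k. \<omega> j = \<omega>' j" for h h' k \<omega> \<omega>'
    proof -
      have "Hsel k \<omega> = Hsel k \<omega>'" by (rule Hpast) (use that in auto)
      moreover have "\<omega> k = \<omega>' k" using that by auto
      ultimately show ?thesis by (simp add: W_def)
    qed
    have Wbd: "(\<integral>\<^sup>+ s. ennreal (exp (l * W h h' k (fun_upd \<omega> k s))) \<partial>M0) \<le> ennreal (exp (l^2/2))"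
      if hh: "h \<in> HT" "h' \<in> HT" and k: "k \<ge> 1" and w: "\<omega> \<in> space Seq.S" for h h' l k \<omega>
    proof -
      have Hk: "Hsel k (fun_upd \<omega> k s) = Hsel k \<omega>" for s by (rule Hpast) auto
      show ?thesis
      proof (cases "h \<in> Hsel k \<omega> \<and> h' \<in> Hsel k \<omega>")
        case True
        have eq: "W h h' k (fun_upd \<omega> k s) = Gfun loss (Hsel k \<omega>) h h' s - r h h'" for s
          using True k by (simp add: W_def Hk)
        show ?thesis unfolding eq M0_def r_def U_def
          by (rule step_hoeff[OF D loss_range]) (use True Hsub[OF k, of \<omega>] HT_fin in \<open>auto intro: finite_subset loss_meas dis_meas\<close>)
      next
        case False
        have eq: "W h h' k (fun_upd \<omega> k s) = 0" for s
          using False by (auto simp: W_def Hk)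
        show ?thesis unfolding eq using pM0 by (simp add: prob_space.emeasure_space_1)
      qed
    qed
    define \<Delta> where "\<Delta> T = Delta T n \<delta>" for T
    define arg where "arg T = 2 * real T * (real T + 1) * (real n)^2 / \<delta>" for T
    have arg1: "arg T > 1" if "T \<ge> 1" for T
    proof -
      have "2 * real T * (real T + 1) * (real n)^2 \<ge> 1 * 1 * 1 * 1"
        using that n1 by (intro mult_mono) auto
      then show ?thesis unfolding arg_def using 2 \<delta> by (simp add: less_divide_eq)
    qed
    have Dpos: "\<Delta> T \<ge> 0" if "T \<ge> 1" for T
      unfolding \<Delta>_def Delta_def using arg1[OF that] by (simp add: arg_def[symmetric])
    have Dsq: "real T * (\<Delta> T)^2 / 2 = ln (arg T)" if "T \<ge> 1" for T
    proof -
      have "0 \<le> (2 / real T) * ln (arg T)" using arg1[OF that] by simp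
      then have "(\<Delta> T)^2 = (2 / real T) * ln (arg T)"
        unfolding \<Delta>_def Delta_def arg_def by simp
      then show ?thesis using that by simp
    qed
    have expD: "exp (- real T * (\<Delta> T)^2/2) = \<delta> / (2 * real T * (real T + 1) * (real n)^2)" if "T \<ge> 1" for T
    proof -
      have "exp (- real T * (\<Delta> T)^2/2) = exp (- ln (arg T))" using Dsq[OF that] by simp
      also have "\<dots> = 1 / arg T" using arg1[OF that] by (simp add: exp_minus inverse_eq_divide)
      finally show ?thesis by (simp add: arg_def)
    qed
    define Sm where "Sm h h' T \<omega> = (\<Sum>k=1..T. W h h' k \<omega>)" for h h' T \<omega>
    define B1 where "B1 T p = {\<omega> \<in> space Seq.S. real T * \<Delta> T \<le> Sm (fst p) (snd p) T \<omega>}" for T p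
    define B2 where "B2 T p = {\<omega> \<in> space Seq.S. real T * \<Delta> T \<le> - Sm (fst p) (snd p) T \<omega>}" for T p
    define Bad where "Bad T = (\<Union>p\<in>HT \<times> HT. B1 T p \<union> B2 T p)" for T
    have B1m: "B1 T p \<in> sets Seq.S" if "p \<in> HT \<times> HT" for T p
    proof -
      have [measurable]: "W (fst p) (snd p) k \<in> borel_measurable Seq.S" for k using Wmeas that by auto
      show ?thesis unfolding B1_def Sm_def by measurable
    qed
    have B2m: "B2 T p \<in> sets Seq.S" if "p \<in> HT \<times> HT" for T p
    proof -
      have [measurable]: "W (fst p) (snd p) k \<in> borel_measurable Seq.S" for k using Wmeas that by auto
      show ?thesis unfolding B2_def Sm_def by measurable
    qed
    have Badm: "Bad T \<in> sets Seq.S" for T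
      unfolding Bad_def using B1m B2m HT_fin by auto
    have Bbound: "emeasure Seq.S (B1 T p) \<le> ennreal (\<delta> / (2 * real T * (real T + 1) * (real n)^2))
               \<and> emeasure Seq.S (B2 T p) \<le> ennreal (\<delta> / (2 * real T * (real T + 1) * (real n)^2))"
      if "p \<in> HT \<times> HT" "T \<ge> 1" for T p
    proof -
      have hh: "fst p \<in> HT" "snd p \<in> HT" using that by auto
      note tl = Seq.tails[of "W (fst p) (snd p)" "\<Delta> T" T, OF Wmeas[OF hh] Wdep Wbd[OF hh] Dpos[OF that(2)]]
      show ?thesis using tl expD[OF that(2)] unfolding B1_def B2_def Sm_def by simp
    qed
    have BadBound: "emeasure Seq.S (Bad T) \<le> ennreal (\<delta> / (real T * (real T + 1)))" if "T \<ge> 1" for T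
    proof -
      let ?e = "\<delta> / (2 * real T * (real T + 1) * (real n)^2)"
      have "emeasure Seq.S (Bad T) \<le> (\<Sum>p\<in>HT \<times> HT. emeasure Seq.S (B1 T p \<union> B2 T p))"
        unfolding Bad_def by (rule emeasure_subadditive_finite) (use HT_fin B1m B2m in auto)
      also have "\<dots> \<le> (\<Sum>p\<in>HT \<times> HT. ennreal (2 * ?e))"
      proof (rule sum_mono)
        fix p assume p: "p \<in> HT \<times> HT"
        have "emeasure Seq.S (B1 T p \<union> B2 T p) \<le> emeasure Seq.S (B1 T p) + emeasure Seq.S (B2 T p)"
          by (rule emeasure_subadditive) (use B1m[OF p] B2m[OF p] in auto)
        also have "\<dots> \<le> ennreal ?e + ennreal ?e"
          using Bbound[OF p that] by (intro add_mono) auto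
        also have "\<dots> = ennreal (2 * ?e)"
          using \<delta> by (simp add: ennreal_plus[symmetric] del: ennreal_plus)
        finally show "emeasure Seq.S (B1 T p \<union> B2 T p) \<le> ennreal (2 * ?e)" .
      qed
      also have "\<dots> = ennreal (real n * real n * (2 * ?e))"
      proof -
        have "(\<Sum>p\<in>HT \<times> HT. ennreal (2 * ?e)) = of_nat (n * n) * ennreal (2 * ?e)"
          using HT_fin by (simp add: n_def card_cartesian_product)
        also have "\<dots> = ennreal (real (n * n)) * ennreal (2 * ?e)"
          by (simp only: ennreal_of_nat_eq_real_of_nat)
        also have "\<dots> = ennreal (real (n * n) * (2 * ?e))"
          by (rule ennreal_mult'[symmetric]) simp
        finally show ?thesis by simp
      qed
      also have "real n * real n * (2 * ?e) = \<delta> / (real T * (real T + 1))"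
      proof -
        have "real n > 0" using n1 by auto
        then have x: "2 * (real n)^2 \<noteq> 0" by simp
        have "real n * real n * (2 * ?e)
            = (2 * (real n)^2) * (\<delta> / ((real T * (real T + 1)) * (2 * (real n)^2)))"
          by (simp add: power2_eq_square algebra_simps)
        also have "\<dots> = \<delta> / (real T * (real T + 1))" by (rule frac_aux[OF x])
        finally show ?thesis .
      qed
      finally show ?thesis .
    qed
    define BadAll where "BadAll = (\<Union>i. Bad (Suc i))"
    have BadAllm: "BadAll \<in> sets Seq.S" unfolding BadAll_def using Badm by auto
    have sums: "(\<lambda>i. \<delta> / (real (Suc i) * (real (Suc i) + 1))) sums \<delta>"
    proof -
      have lim: "(\<lambda>i. \<delta> / real (Suc i)) \<longlonglongrightarrow> 0"
        using tendsto_mult_right_zero[OF LIMSEQ_inverse_real_of_nat, of \<delta>] by (simp add: divide_inverse)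
      have "(\<lambda>i. \<delta> / real (Suc i) - \<delta> / real (Suc (Suc i))) sums (\<delta> / real (Suc 0) - 0)"
        by (rule telescope_sums'[OF lim])
      moreover have "\<delta> / real (Suc i) - \<delta> / real (Suc (Suc i)) = \<delta> / (real (Suc i) * (real (Suc i) + 1))" for i
        by (simp add: field_simps)
      ultimately show ?thesis by simp
    qed
    have "emeasure Seq.S BadAll \<le> (\<Sum>i. emeasure Seq.S (Bad (Suc i)))"
      unfolding BadAll_def by (rule emeasure_subadditive_countably) (use Badm in auto)
    also have "\<dots> \<le> (\<Sum>i. ennreal (\<delta> / (real (Suc i) * (real (Suc i) + 1))))"
    proof -
      have bb: "emeasure Seq.S (Bad (Suc i)) \<le> ennreal (\<delta> / (real (Suc i) * (real (Suc i) + 1)))" for i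
        by (rule BadBound) simp
      show ?thesis by (rule suminf_le[OF bb]) simp_all
    qed
    also have "\<dots> = ennreal \<delta>"
      using sums \<delta> by (subst suminf_ennreal2) (auto simp: sums_iff)
    finally have eB: "emeasure Seq.S BadAll \<le> ennreal \<delta>" .
    then have mB: "measure Seq.S BadAll \<le> \<delta>"
      using \<delta> by (simp add: Seq.emeasure_eq_measure)
    define A where "A = space Seq.S - BadAll"
    have Am: "A \<in> sets Seq.S" unfolding A_def using BadAllm by auto
    have mA: "measure Seq.S A \<ge> 1 - \<delta>"
      unfolding A_def using Seq.prob_compl[OF BadAllm] mB by simp
    have ident: "Sm h h' T \<omega> = real T * (iw_err loss Hsel T h \<omega> - iw_err loss Hsel T h' \<omega> - r h h')"
      if T: "T \<ge> 1" and hh: "h \<in> Hsel T \<omega>" "h' \<in> Hsel T \<omega>" for h h' T \<omega>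
    proof -
      define tm where "tm g k = (if query loss Hsel k \<omega>
        then loss (g (fst (fst (\<omega> k)))) (snd (fst (\<omega> k))) / query_prob loss (Hsel k \<omega>) (fst (fst (\<omega> k)))
        else 0)" for g k
      have "W h h' k \<omega> = tm h k - tm h' k - r h h'" if "k \<in> {1..T}" for k
      proof -
        have "h \<in> Hsel k \<omega>" "h' \<in> Hsel k \<omega>" using Hanti[of k T \<omega>] that hh by auto
        then show ?thesis using that by (simp add: W_def tm_def Gfun_def query_def)
      qed
      then have "Sm h h' T \<omega> = (\<Sum>k=1..T. tm h k) - (\<Sum>k=1..T. tm h' k) - real T * r h h'"
        unfolding Sm_def by (simp add: sum_subtractf)
      moreover have "iw_err loss Hsel T g \<omega> = (1 / real T) * (\<Sum>k=1..T. tm g k)" for g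
        by (simp add: iw_err_def tm_def)
      ultimately show ?thesis using T by (simp add: field_simps)
    qed
    show ?thesis
    proof (rule bexI[of _ A])
      show "A \<in> sets (sample_space D)" using Am SS by simp
      show "measure (sample_space D) A \<ge> 1 - \<delta> \<and>
           (\<forall>\<omega>\<in>A. \<forall>T::nat. T \<ge> 1 \<longrightarrow> (\<forall>h\<in>Hsel T \<omega>. \<forall>h'\<in>Hsel T \<omega>.
              \<bar>iw_err loss Hsel T h \<omega> - iw_err loss Hsel T h' \<omega>
                 - (gen_err D loss h - gen_err D loss h')\<bar>
              \<le> (1 + err_dis D loss h h') * Delta T (card HT) \<delta>))"
      proof (intro conjI ballI allI impI)
        show "measure (sample_space D) A \<ge> 1 - \<delta>" using mA SS by simp
        fix \<omega> T h h' assume w: "\<omega> \<in> A" and T: "1 \<le> T" and h: "h \<in> Hsel T \<omega>" and h': "h' \<in> Hsel T \<omega>"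
        have hH: "(h, h') \<in> HT \<times> HT" using Hsub[OF T] h h' by auto
        have "\<omega> \<notin> Bad T"
        proof
          assume "\<omega> \<in> Bad T"
          moreover have "T = Suc (T - 1)" using T by simp
          ultimately have "\<omega> \<in> Bad (Suc (T - 1))" by simp
          then have "\<omega> \<in> BadAll" unfolding BadAll_def by blast
          then show False using w by (simp add: A_def)
        qed
        moreover have "\<omega> \<in> space Seq.S" using w by (simp add: A_def)
        ultimately have nb: "\<not> real T * \<Delta> T \<le> Sm h h' T \<omega>" "\<not> real T * \<Delta> T \<le> - Sm h h' T \<omega>"
          using hH unfolding Bad_def B1_def B2_def by auto
        let ?v = "iw_err loss Hsel T h \<omega> - iw_err loss Hsel T h' \<omega> - (gen_err D loss h - gen_err D loss h')"
        have "real T * \<bar>?v\<bar> < real T * \<Delta> T"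
          using nb ident[OF T h h'] unfolding r_def by (simp add: abs_mult abs_less_iff)
        then have v: "\<bar>?v\<bar> \<le> \<Delta> T" using T by simp
        have ed: "0 \<le> err_dis D loss h h'"
          unfolding err_dis_def by (rule Bochner_Integration.integral_nonneg) (rule pt_dis_nonneg[OF loss_range])
        have "\<Delta> T \<le> (1 + err_dis D loss h h') * \<Delta> T"
          using ed Dpos[OF T] by (simp add: mult_le_cancel_right1)
        with v show "\<bar>?v\<bar> \<le> (1 + err_dis D loss h h') * Delta T (card HT) \<delta>"
          by (simp add: \<Delta>_def n_def)
      qed
    qed
  qed
qed

end
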